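(* Let $\mathcal{M}_1,\dots,\mathcal{M}_k$ be register automata over the alphabet $\Sigma=\{<,=,>\}$, each having the incremental-automaton property, and let $\mathcal{I}=\mathcal{M}_1\cap\dots\cap\mathcal{M}_k$ be their intersection. Let $e,e_0,e_1,\dots,e_k\in\mathbb{Z}$ and let $X=\langle X_1,\dots,X_n\rangle$ be an accepting sequence with respect to $\mathcal{I}$, where $(R_1,\dots,R_k)$ is the vector of values returned by $\mathcal{I}$ after consuming the signature of $X$, and set $v=e+e_0\cdot n+\sum_{i=1}^k e_i\cdot R_i$. Then the weight of $X$ in the invariant digraph $D(\mathcal{I},v)$ is less than or equal to $e+e_0\cdot n+\sum_{i=1}^k e_i\cdot R_i$.
   Context: Signature: for an integer sequence $X=\langle X_1,\dots,X_n\rangle$, its signature is the word $S=\langle S_1,\dots,S_{n-1}\rangle$ over $\Sigma=\{<,=,>\}$ with $S_i$ equal to $<$, $=$ or $>$ according as $X_i<X_{i+1}$, $X_i=X_{i+1}$, $X_i>X_{i+1}$ (the signature has arity $p=2$). Register automaton: a tuple $(Q,\Sigma,\delta,q_0,I,A,\alpha)$ with finite state set $Q$, input alphabet $\Sigma$, a (deterministic, possibly partial) transition function $\delta:(Q\times\mathbb{Z}^r)\times\Sigma\to Q\times\mathbb{Z}^r$ ($r\ge1$ registers), initial state $q_0$, initial register values $I\in\mathbb{Z}^r$, accepting states $A\subseteq Q$, and acceptance function $\alpha:\mathbb{Z}^r\to\mathbb{Z}$. Consuming a word from $(q_0,I)$ triggers a sequence of transitions; if it ends in an accepting state with register values $d$,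 the automaton returns $\alpha(d)$, otherwise it fails. A sequence $X$ is accepting w.r.t. an automaton if the automaton does not fail on the signature of $X$. Incremental-automaton property of an automaton with registers $A_1,\dots,A_r$: (1) every initial value $I_j$ is in $\mathbb{N}$; (2) on every transition $t$, each register is updated as $A_j\leftarrow \alpha^t_{j,0}+\sum_{i=1}^r\alpha^t_{j,i}A_i$ with $\alpha^t_{j,0}\in\mathbb{N}$ and $\alpha^t_{j,i}\in\{0,1\}$; (3) the register $A_r$ (main register) satisfies: (a) the returned value is the final value of $A_r$, (b) $\alpha^t_{r,r}=1$ for every transition $t$, (c) there is a non-empty set $T$ of transitions with $\sum_{i=1}^{r-1}\alpha^t_{r,i}>0$ for all $t\in T$; (4) for every other register $A_j$, $j<r$ (potential registers), on every transition $t$ we have $\sum_{i\ne j}\alpha^t_{j,i}=0$, and if $\alpha^t_{r,j}>0$ then $\alpha^t_{j,j}=0$. Intersection $\mathcal{I}=\mathcal{M}_1\cap\dots\cap\mathcal{M}_k$: the product automaton reading each letter simultaneously in all $\mathcal{M}_i$; its states are tuples of states, its registers are the disjoint union of the registers of the $\mathcal{M}_i$ (not merged), each updated as in its own $\mathcal{M}_i$; a state is accepting iff all components are; it returns $(R_1,\dots,R_k)$ where $R_i$ is the value returned by $\mathcal{M}_i$. For a transition $t$ of $\mathcal{I}$, $\alpha^t_{i,j,0}$ denotes the constant term in the update of the register of $\mathcal{I}$ corresponding to register $j$ of $\mathcal{M}_i$, and $I_{i,j}$ its initial value; $r_i$ is the number of registers of $\mathcal{M}_i$ (register $r_i$ being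 its main register). Invariant digraph $D(\mathcal{I},v)$ for $v=e+e_0n+\sum_i e_iR_i$: nodes are the states of $\mathcal{I}$; each transition $t$ of $\mathcal{I}$ gives an arc with weight $e_0+\sum_{i=1}^k e_i\beta_i^t$, where $\beta_i^t=\alpha^t_{i,r_i,0}$ if $e_i\ge0$ and $\beta_i^t=\sum_{j=1}^{r_i}\alpha^t_{i,j,0}$ if $e_i<0$. Walk and weight of an accepting sequence $X$: the walk of $X$ is the path in $D(\mathcal{I},v)$ formed by the arcs of the transitions triggered when consuming the signature of $X$. The weight of $X$ is the weight of this walk plus the initialisation weight $e+e_0\cdot(p-1)+\sum_{i=1}^k e_i\beta_i^0$ with $p=2$, where $\beta_i^0=I_{i,r_i}$ if $e_i\ge0$ and $\beta_i^0=\sum_{j=1}^{r_i}I_{i,j}$ if $e_i<0$. *)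

theory Defs
  imports Main
begin

datatype sig = Lt | Eq | Gt

definition cmp_sig :: "int \<Rightarrow> int \<Rightarrow> sig" where
  "cmp_sig x y = (if x < y then Lt else if x = y then Eq else Gt)"

definition signature :: "int list \<Rightarrow> sig list" where
  "signature X = map (\<lambda>i. cmp_sig (X ! i) (X ! (i + 1))) [0..<length X - 1]"

text \<open>Registers are indexed 1..nreg; register values are functions nat => int
  (only the entries 1..nreg matter).\<close>

record 'q reg_aut =
  states :: "'q set"
  delta  :: "'q \<Rightarrow> sig \<Rightarrow> 'q option"
  upd    :: "'q \<Rightarrow> sig \<Rightarrow> (nat \<Rightarrow> int) \<Rightarrow> (nat \<Rightarrow> int)"
  q0     :: 'q
  nreg   :: nat
  init   :: "nat \<Rightarrow> int"
  acc    :: "'q set"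
  alpha  :: "(nat \<Rightarrow> int) \<Rightarrow> int"

definition wf_aut :: "'q reg_aut \<Rightarrow> bool" where
  "wf_aut M \<longleftrightarrow> finite (states M) \<and> q0 M \<in> states M \<and> acc M \<subseteq> states M \<and> nreg M \<ge> 1
     \<and> (\<forall>q\<in>states M. \<forall>s q'. delta M q s = Some q' \<longrightarrow> q' \<in> states M)"

definition is_trans :: "'q reg_aut \<Rightarrow> 'q \<Rightarrow> sig \<Rightarrow> bool" where
  "is_trans M q s \<longleftrightarrow> q \<in> states M \<and> delta M q s \<noteq> None"

text \<open>Constant term alpha^t_{j,0} of the (affine) update of register j on transition t=(q,s).\<close>
definition cst :: "'q reg_aut \<Rightarrow> 'q \<Rightarrow> sig \<Rightarrow> nat \<Rightarrow> int" where
  "cst M q s j = upd M q s (\<lambda>_. 0) j"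

text \<open>Incremental-automaton property; a q s j i is the coefficient alpha^t_{j,i}.\<close>
definition incremental :: "'q reg_aut \<Rightarrow> bool" where
  "incremental M \<longleftrightarrow> wf_aut M \<and> (\<exists>a :: 'q \<Rightarrow> sig \<Rightarrow> nat \<Rightarrow> nat \<Rightarrow> int.
     (\<forall>j\<in>{1..nreg M}. init M j \<ge> 0)
   \<and> (\<forall>q s. is_trans M q s \<longrightarrow>
        (\<forall>j\<in>{1..nreg M}. cst M q s j \<ge> 0
           \<and> (\<forall>i\<in>{1..nreg M}. a q s j i \<in> {0, 1})
           \<and> (\<forall>d. upd M q s d j = cst M q s j + (\<Sum>i=1..nreg M. a q s j i * d i))))
   \<and> (\<forall>d. alpha M d = d (nreg M))
   \<and> (\<forall>q s. is_trans M q s \<longrightarrow> a q s (nreg M) (nreg M) = 1)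
   \<and> (\<exists>q s. is_trans M q s \<and> (\<Sum>i=1..nreg M - 1. a q s (nreg M) i) > 0)
   \<and> (\<forall>q s. is_trans M q s \<longrightarrow> (\<forall>j\<in>{1..nreg M - 1}.
        (\<Sum>i\<in>{1..nreg M} - {j}. a q s j i) = 0
      \<and> (a q s (nreg M) j > 0 \<longrightarrow> a q s j j = 0))))"

text \<open>Product states are lists of component states; the product register
  (i,j) is register j of M_(i+1), stored as ds i j.\<close>

definition inter_delta :: "'q reg_aut list \<Rightarrow> 'q list \<Rightarrow> sig \<Rightarrow> 'q list option" where
  "inter_delta Ms qs s =
     (if \<forall>i<length Ms. delta (Ms ! i) (qs ! i) s \<noteq> None
      then Some (map (\<lambda>i. the (delta (Ms ! i) (qs ! i) s)) [0..<length Ms]) else None)"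

definition inter_upd :: "'q reg_aut list \<Rightarrow> 'q list \<Rightarrow> sig \<Rightarrow> (nat \<Rightarrow> nat \<Rightarrow> int) \<Rightarrow> (nat \<Rightarrow> nat \<Rightarrow> int)" where
  "inter_upd Ms qs s ds = (\<lambda>i. if i < length Ms then upd (Ms ! i) (qs ! i) s (ds i) else ds i)"

fun inter_run :: "'q reg_aut list \<Rightarrow> 'q list \<Rightarrow> (nat \<Rightarrow> nat \<Rightarrow> int) \<Rightarrow> sig list
                  \<Rightarrow> ('q list \<times> (nat \<Rightarrow> nat \<Rightarrow> int)) option" where
  "inter_run Ms qs ds [] = Some (qs, ds)"
| "inter_run Ms qs ds (s # w) =
     (case inter_delta Ms qs s of None \<Rightarrow> None
      | Some qs' \<Rightarrow> inter_run Ms qs' (inter_upd Ms qs s ds) w)"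

definition inter_q0 :: "'q reg_aut list \<Rightarrow> 'q list" where
  "inter_q0 Ms = map q0 Ms"

definition inter_init :: "'q reg_aut list \<Rightarrow> nat \<Rightarrow> nat \<Rightarrow> int" where
  "inter_init Ms = (\<lambda>i. init (Ms ! i))"

definition inter_final :: "'q reg_aut list \<Rightarrow> int list \<Rightarrow> ('q list \<times> (nat \<Rightarrow> nat \<Rightarrow> int)) option" where
  "inter_final Ms X = inter_run Ms (inter_q0 Ms) (inter_init Ms) (signature X)"

definition accepting :: "'q reg_aut list \<Rightarrow> int list \<Rightarrow> bool" where
  "accepting Ms X \<longleftrightarrow> (case inter_final Ms X of None \<Rightarrow> False
     | Some (qs, ds) \<Rightarrow> (\<forall>i<length Ms. qs ! i \<in> acc (Ms ! i)))"

definition returned :: "'q reg_aut list \<Rightarrow> int list \<Rightarrow> int list" where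
  "returned Ms X = (case inter_final Ms X of None \<Rightarrow> []
     | Some (qs, ds) \<Rightarrow> map (\<lambda>i. alpha (Ms ! i) (ds i)) [0..<length Ms])"

definition beta :: "'q reg_aut \<Rightarrow> int \<Rightarrow> 'q \<Rightarrow> sig \<Rightarrow> int" where
  "beta M ei q s = (if ei \<ge> 0 then cst M q s (nreg M) else (\<Sum>j=1..nreg M. cst M q s j))"

definition beta0 :: "'q reg_aut \<Rightarrow> int \<Rightarrow> int" where
  "beta0 M ei = (if ei \<ge> 0 then init M (nreg M) else (\<Sum>j=1..nreg M. init M j))"

definition arc_weight :: "'q reg_aut list \<Rightarrow> int \<Rightarrow> int list \<Rightarrow> 'q list \<Rightarrow> sig \<Rightarrow> int" where
  "arc_weight Ms e0 es qs s = e0 + (\<Sum>i<length Ms. es ! i * beta (Ms ! i) (es ! i) (qs ! i) s)"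

fun walk_weight :: "'q reg_aut list \<Rightarrow> int \<Rightarrow> int list \<Rightarrow> 'q list \<Rightarrow> sig list \<Rightarrow> int" where
  "walk_weight Ms e0 es qs [] = 0"
| "walk_weight Ms e0 es qs (s # w) =
     arc_weight Ms e0 es qs s
     + (case inter_delta Ms qs s of None \<Rightarrow> 0 | Some qs' \<Rightarrow> walk_weight Ms e0 es qs' w)"

text \<open>Weight of X (p = 2): walk weight plus initialisation weight.\<close>
definition seq_weight :: "'q reg_aut list \<Rightarrow> int \<Rightarrow> int \<Rightarrow> int list \<Rightarrow> int list \<Rightarrow> int" where
  "seq_weight Ms e e0 es X =
     walk_weight Ms e0 es (inter_q0 Ms) (signature X)
     + (e + e0 * (2 - 1) + (\<Sum>i<length Ms. es ! i * beta0 (Ms ! i) (es ! i)))"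

end

theory Submission
  imports Defs
begin

lemma incr_props:
  assumes "incremental M"
  obtains a :: "'q \<Rightarrow> sig \<Rightarrow> nat \<Rightarrow> nat \<Rightarrow> int" where
    "wf_aut M"
    "\<forall>j\<in>{1..nreg M}. init M j \<ge> 0"
    "\<forall>q s. is_trans M q s \<longrightarrow>
        (\<forall>j\<in>{1..nreg M}. cst M q s j \<ge> 0
           \<and> (\<forall>i\<in>{1..nreg M}. a q s j i \<in> {0, 1})
           \<and> (\<forall>d. upd M q s d j = cst M q s j + (\<Sum>i=1..nreg M. a q s j i * d i)))"
    "\<forall>d. alpha M d = d (nreg M)"
    "\<forall>q s. is_trans M q s \<longrightarrow> a q s (nreg M) (nreg M) = 1"
    "\<forall>q s. is_trans M q s \<longrightarrow> (\<forall>j\<in>{1..nreg M - 1}.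
        (\<Sum>i\<in>{1..nreg M} - {j}. a q s j i) = 0
      \<and> (a q s (nreg M) j > 0 \<longrightarrow> a q s j j = 0))"
  using assms unfolding incremental_def by blast

lemma step_nonneg:
  assumes "incremental M" "is_trans M q s" "\<forall>j\<in>{1..nreg M}. d j \<ge> 0" "j \<in> {1..nreg M}"
  shows "upd M q s d j \<ge> 0"
proof -
  obtain a where W: "wf_aut M" and I0: "\<forall>j\<in>{1..nreg M}. init M j \<ge> 0" and A: "\<forall>q s. is_trans M q s \<longrightarrow>
        (\<forall>j\<in>{1..nreg M}. cst M q s j \<ge> 0
           \<and> (\<forall>i\<in>{1..nreg M}. a q s j i \<in> {0, 1})
           \<and> (\<forall>d. upd M q s d j = cst M q s j + (\<Sum>i=1..nreg M. a q s j i * d i)))"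
    and Al: "\<forall>d. alpha M d = d (nreg M)"
    and R: "\<forall>q s. is_trans M q s \<longrightarrow> a q s (nreg M) (nreg M) = 1"
    and P: "\<forall>q s. is_trans M q s \<longrightarrow> (\<forall>j\<in>{1..nreg M - 1}.
        (\<Sum>i\<in>{1..nreg M} - {j}. a q s j i) = 0
      \<and> (a q s (nreg M) j > 0 \<longrightarrow> a q s j j = 0))"
    by (rule incr_props[OF assms(1)])
  have u: "upd M q s d j = cst M q s j + (\<Sum>i=1..nreg M. a q s j i * d i)" and c: "cst M q s j \<ge> 0"
    using A assms by auto
  have "(\<Sum>i=1..nreg M. a q s j i * d i) \<ge> 0"
    apply (rule sum_nonneg)
    using A assms by fastforce
  then show ?thesis using u c by linarith
qed

lemma step_main:
  assumes "incremental M" "is_trans M q s" "\<forall>j\<in>{1..nreg M}. d j \<ge> 0"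
  shows "cst M q s (nreg M) + d (nreg M) \<le> upd M q s d (nreg M)"
proof -
  obtain a where W: "wf_aut M" and I0: "\<forall>j\<in>{1..nreg M}. init M j \<ge> 0" and A: "\<forall>q s. is_trans M q s \<longrightarrow>
        (\<forall>j\<in>{1..nreg M}. cst M q s j \<ge> 0
           \<and> (\<forall>i\<in>{1..nreg M}. a q s j i \<in> {0, 1})
           \<and> (\<forall>d. upd M q s d j = cst M q s j + (\<Sum>i=1..nreg M. a q s j i * d i)))"
    and Al: "\<forall>d. alpha M d = d (nreg M)"
    and R: "\<forall>q s. is_trans M q s \<longrightarrow> a q s (nreg M) (nreg M) = 1"
    and P: "\<forall>q s. is_trans M q s \<longrightarrow> (\<forall>j\<in>{1..nreg M - 1}.
        (\<Sum>i\<in>{1..nreg M} - {j}. a q s j i) = 0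
      \<and> (a q s (nreg M) j > 0 \<longrightarrow> a q s j j = 0))"
    by (rule incr_props[OF assms(1)])
  let ?r = "nreg M"
  have r1: "?r \<ge> 1" using W unfolding wf_aut_def by auto
  have rin: "?r \<in> {1..?r}" using r1 by auto
  have u: "upd M q s d ?r = cst M q s ?r + (\<Sum>i=1..?r. a q s ?r i * d i)"
    using A assms(2) rin by blast
  have EQ: "(\<Sum>i=1..?r. a q s ?r i * d i) = a q s ?r ?r * d ?r + (\<Sum>i\<in>{1..?r}-{?r}. a q s ?r i * d i)"
    using sum.remove[OF _ rin, of "\<lambda>i. a q s ?r i * d i"] by simp
  have A': "\<forall>i\<in>{1..?r}. a q s ?r i \<in> {0,1}" using A assms(2) rin by blast
  moreover have "(\<Sum>i\<in>{1..?r}-{?r}. a q s ?r i * d i) \<ge> 0"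
  proof (rule sum_nonneg)
    fix x assume x: "x \<in> {1..?r}-{?r}"
    then have "a q s ?r x \<in> {0,1}" "d x \<ge> 0" using A' assms(3) by auto
    then show "0 \<le> a q s ?r x * d x" by auto
  qed
  ultimately show ?thesis using EQ u R assms(2) by simp
qed

lemma col_le1:
  fixes a :: "'q \<Rightarrow> sig \<Rightarrow> nat \<Rightarrow> nat \<Rightarrow> int"
  assumes "incremental M" "is_trans M q s"
    and A: "\<forall>j\<in>{1..nreg M}. (\<forall>i\<in>{1..nreg M}. a q s j i \<in> {0, 1})"
    and R: "a q s (nreg M) (nreg M) = 1"
    and P: "\<forall>j\<in>{1..nreg M - 1}.
        (\<Sum>i\<in>{1..nreg M} - {j}. a q s j i) = 0
      \<and> (a q s (nreg M) j > 0 \<longrightarrow> a q s j j = 0)"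
    and i: "i \<in> {1..nreg M}"
  shows "(\<Sum>j=1..nreg M. a q s j i) \<le> 1"
proof -
  let ?r = "nreg M"
  have z: "a q s j i = 0" if j: "j \<in> {1..?r}" "j \<noteq> i" "j \<noteq> ?r" for j
  proof -
    have j1: "j \<in> {1..?r - 1}" using j by auto
    have "(\<Sum>i\<in>{1..?r} - {j}. a q s j i) = 0" using P j1 by blast
    moreover have "\<forall>i'\<in>{1..?r} - {j}. a q s j i' \<ge> 0"
    proof
      fix i' assume "i' \<in> {1..?r} - {j}"
      then have "a q s j i' \<in> {0,1}" using A j by blast
      then show "0 \<le> a q s j i'" by auto
    qed
    ultimately have "\<forall>i'\<in>{1..?r} - {j}. a q s j i' = 0"
      using sum_nonneg_eq_0_iff[of "{1..?r} - {j}" "a q s j"] by auto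
    then show ?thesis using i j by auto
  qed
  have "(\<Sum>j=1..?r. a q s j i) = (\<Sum>j\<in>{i, ?r}. a q s j i)"
  proof (rule sum.mono_neutral_right)
    show "finite {1..?r}" by simp
    show "{i, ?r} \<subseteq> {1..?r}" using i by auto
    show "\<forall>j\<in>{1..?r} - {i, ?r}. a q s j i = 0" using z by blast
  qed
  moreover have "(\<Sum>j\<in>{i, ?r}. a q s j i) \<le> 1"
  proof (cases "i = ?r")
    case True then show ?thesis using R by simp
  next
    case False
    have i1: "i \<in> {1..?r - 1}" using i False by auto
    have "a q s i i \<in> {0,1}" "a q s ?r i \<in> {0,1}" using A i by auto
    moreover have "a q s ?r i > 0 \<longrightarrow> a q s i i = 0" using P i1 by blast
    ultimately show ?thesis using False by auto
  qed
  ultimately show ?thesis by simp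
qed

lemma step_sum:
  assumes "incremental M" "is_trans M q s" "\<forall>j\<in>{1..nreg M}. d j \<ge> 0"
  shows "(\<Sum>j=1..nreg M. upd M q s d j) \<le> (\<Sum>j=1..nreg M. cst M q s j) + (\<Sum>j=1..nreg M. d j)"
proof -
  obtain a where W: "wf_aut M" and I0: "\<forall>j\<in>{1..nreg M}. init M j \<ge> 0" and A: "\<forall>q s. is_trans M q s \<longrightarrow>
        (\<forall>j\<in>{1..nreg M}. cst M q s j \<ge> 0
           \<and> (\<forall>i\<in>{1..nreg M}. a q s j i \<in> {0, 1})
           \<and> (\<forall>d. upd M q s d j = cst M q s j + (\<Sum>i=1..nreg M. a q s j i * d i)))"
    and Al: "\<forall>d. alpha M d = d (nreg M)"
    and R: "\<forall>q s. is_trans M q s \<longrightarrow> a q s (nreg M) (nreg M) = 1"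
    and P: "\<forall>q s. is_trans M q s \<longrightarrow> (\<forall>j\<in>{1..nreg M - 1}.
        (\<Sum>i\<in>{1..nreg M} - {j}. a q s j i) = 0
      \<and> (a q s (nreg M) j > 0 \<longrightarrow> a q s j j = 0))"
    by (rule incr_props[OF assms(1)])
  let ?r = "nreg M"
  have E: "(\<Sum>j=1..?r. upd M q s d j) = (\<Sum>j=1..?r. cst M q s j + (\<Sum>i=1..?r. a q s j i * d i))"
    using A assms(2) by (intro sum.cong) auto
  have E2: "(\<Sum>j=1..?r. cst M q s j + (\<Sum>i=1..?r. a q s j i * d i)) = (\<Sum>j=1..?r. cst M q s j) + (\<Sum>i=1..?r. \<Sum>j=1..?r. a q s j i * d i)"
    unfolding sum.distrib by (subst sum.swap) (rule refl)
  have A': "\<forall>j\<in>{1..?r}. \<forall>i\<in>{1..?r}. a q s j i \<in> {0,1}" using A assms(2) by blast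
  have R': "a q s ?r ?r = 1" using R assms(2) by blast
  have P': "\<forall>j\<in>{1..nreg M - 1}.
        (\<Sum>i\<in>{1..nreg M} - {j}. a q s j i) = 0
      \<and> (a q s (nreg M) j > 0 \<longrightarrow> a q s j j = 0)" using P assms(2) by blast
  have S: "(\<Sum>i=1..?r. \<Sum>j=1..?r. a q s j i * d i) \<le> (\<Sum>i=1..?r. d i)"
  proof (rule sum_mono)
    fix i assume i: "i \<in> {1..?r}"
    have di: "d i \<ge> 0" using assms(3) i by blast
    have "(\<Sum>j=1..?r. a q s j i * d i) = (\<Sum>j=1..?r. a q s j i) * d i"
      by (simp add: sum_distrib_right)
    also have "\<dots> \<le> 1 * d i"
      by (rule mult_right_mono[OF col_le1[where a=a and i=i, OF assms(1,2) A' R' P' i] di])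
    finally show "(\<Sum>j=1..?r. a q s j i * d i) \<le> d i" by simp
  qed
  show ?thesis using E E2 S by linarith
qed

definition Bf :: "'q reg_aut \<Rightarrow> int \<Rightarrow> (nat \<Rightarrow> int) \<Rightarrow> int" where
  "Bf M ei d = (if ei \<ge> 0 then d (nreg M) else (\<Sum>j=1..nreg M. d j))"

lemma step_comp:
  assumes "incremental M" "is_trans M q s" "\<forall>j\<in>{1..nreg M}. d j \<ge> 0"
  shows "ei * beta M ei q s + ei * Bf M ei d \<le> ei * Bf M ei (upd M q s d)"
proof (cases "ei \<ge> 0")
  case True
  then show ?thesis using step_main[OF assms] mult_left_mono[OF step_main[OF assms] True]
    by (simp add: beta_def Bf_def algebra_simps)
next
  case False
  then have "ei \<le> 0" by simp
  from mult_left_mono_neg[OF step_sum[OF assms] this] False show ?thesis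
    by (simp add: beta_def Bf_def algebra_simps)
qed

definition Inv :: "'q reg_aut list \<Rightarrow> 'q list \<Rightarrow> (nat \<Rightarrow> nat \<Rightarrow> int) \<Rightarrow> bool" where
  "Inv Ms qs ds \<longleftrightarrow> length qs = length Ms \<and> (\<forall>i<length Ms. qs ! i \<in> states (Ms ! i)
      \<and> (\<forall>j\<in>{1..nreg (Ms ! i)}. ds i j \<ge> 0))"

lemma delta_some:
  assumes "inter_delta Ms qs s = Some qs'" "Inv Ms qs ds" "\<forall>M\<in>set Ms. incremental M"
  shows "\<forall>i<length Ms. is_trans (Ms ! i) (qs ! i) s"
    and "Inv Ms qs' (inter_upd Ms qs s ds)"
proof -
  have D: "\<forall>i<length Ms. delta (Ms ! i) (qs ! i) s \<noteq> None"
    using assms(1) unfolding inter_delta_def by (metis option.distinct(1))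
  then have Q: "qs' = map (\<lambda>i. the (delta (Ms ! i) (qs ! i) s)) [0..<length Ms]"
    using assms(1) unfolding inter_delta_def by simp
  show T: "\<forall>i<length Ms. is_trans (Ms ! i) (qs ! i) s"
    using D assms(2) unfolding is_trans_def Inv_def by auto
  show "Inv Ms qs' (inter_upd Ms qs s ds)"
    unfolding Inv_def
  proof (intro conjI allI impI)
    show "length qs' = length Ms" using Q by simp
  next
    fix i assume i: "i < length Ms"
    have inc: "incremental (Ms ! i)" using assms(3) i by simp
    then have wf: "wf_aut (Ms ! i)" unfolding incremental_def by simp
    have "qs ! i \<in> states (Ms ! i)" using assms(2) i unfolding Inv_def by auto
    then show "qs' ! i \<in> states (Ms ! i)"
      using wf D i Q unfolding wf_aut_def by auto
    show "\<forall>j\<in>{1..nreg (Ms ! i)}. 0 \<le> inter_upd Ms qs s ds i j"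
      using step_nonneg[OF inc] T i assms(2) unfolding inter_upd_def Inv_def by auto
  qed
qed

lemma run_bound:
  assumes "\<forall>M\<in>set Ms. incremental M" "length es = length Ms"
  shows "Inv Ms qs ds \<Longrightarrow> inter_run Ms qs ds w = Some (qf, df) \<Longrightarrow>
    Inv Ms qf df \<and>
    walk_weight Ms e0 es qs w + (\<Sum>i<length Ms. es ! i * Bf (Ms ! i) (es ! i) (ds i))
      \<le> e0 * int (length w) + (\<Sum>i<length Ms. es ! i * Bf (Ms ! i) (es ! i) (df i))"
proof (induction w arbitrary: qs ds)
  case Nil
  then show ?case by simp
next
  case (Cons s w)
  obtain qs' where d: "inter_delta Ms qs s = Some qs'"
    using Cons.prems(2) by (cases "inter_delta Ms qs s") auto
  have run: "inter_run Ms qs' (inter_upd Ms qs s ds) w = Some (qf, df)"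
    using Cons.prems d by simp
  note T = delta_some(1)[OF d Cons.prems(1) assms(1)]
  note I = delta_some(2)[OF d Cons.prems(1) assms(1)]
  note IH = Cons.IH[OF I run]
  have step: "(\<Sum>i<length Ms. es ! i * beta (Ms ! i) (es ! i) (qs ! i) s)
      + (\<Sum>i<length Ms. es ! i * Bf (Ms ! i) (es ! i) (ds i))
      \<le> (\<Sum>i<length Ms. es ! i * Bf (Ms ! i) (es ! i) (inter_upd Ms qs s ds i))"
    unfolding sum.distrib[symmetric]
  proof (rule sum_mono)
    fix i assume "i \<in> {..<length Ms}"
    then have i: "i < length Ms" by simp
    show "es ! i * beta (Ms ! i) (es ! i) (qs ! i) s + es ! i * Bf (Ms ! i) (es ! i) (ds i)
       \<le> es ! i * Bf (Ms ! i) (es ! i) (inter_upd Ms qs s ds i)"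
      using step_comp[of "Ms ! i" "qs ! i" s "ds i" "es ! i"] assms(1) T i Cons.prems(1)
      unfolding inter_upd_def Inv_def by auto
  qed
  have W: "walk_weight Ms e0 es qs (s # w) = e0 + (\<Sum>i<length Ms. es ! i * beta (Ms ! i) (es ! i) (qs ! i) s) + walk_weight Ms e0 es qs' w"
    using d by (simp add: arc_weight_def)
  have L: "e0 * int (length (s # w)) = e0 + e0 * int (length w)" by (simp add: algebra_simps)
  from IH have inv: "Inv Ms qf df" and ih: "walk_weight Ms e0 es qs' w +
      (\<Sum>i<length Ms. es ! i * Bf (Ms ! i) (es ! i) (inter_upd Ms qs s ds i))
      \<le> e0 * int (length w) + (\<Sum>i<length Ms. es ! i * Bf (Ms ! i) (es ! i) (df i))" by auto
  show ?case using inv ih step W L by linarith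
qed

theorem theorem1:
  fixes Ms :: "'q reg_aut list" and e e0 :: int and es :: "int list" and X :: "int list"
  assumes "\<forall>M\<in>set Ms. incremental M"
    and "length es = length Ms"
    and "length X \<ge> 1"
    and "accepting Ms X"
  shows "seq_weight Ms e e0 es X
           \<le> e + e0 * int (length X) + (\<Sum>i<length Ms. es ! i * returned Ms X ! i)"
proof -
  obtain qf df where F: "inter_final Ms X = Some (qf, df)"
    using assms(4) unfolding accepting_def by (auto split: option.splits)
  have I0: "Inv Ms (inter_q0 Ms) (inter_init Ms)"
    unfolding Inv_def inter_q0_def inter_init_def
  proof (intro conjI allI impI)
    fix i assume i: "i < length Ms"
    then have inc: "incremental (Ms ! i)" using assms(1) by simp
    show "map q0 Ms ! i \<in> states (Ms ! i)" using inc i unfolding incremental_def wf_aut_def by simp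
    show "\<forall>j\<in>{1..nreg (Ms ! i)}. 0 \<le> init (Ms ! i) j"
      using incr_props[OF inc] by metis
  qed simp
  note RB = run_bound[OF assms(1,2) I0 F[unfolded inter_final_def], of e0]
  have len: "length (signature X) = length X - 1" unfolding signature_def by simp
  have b0: "beta0 (Ms ! i) (es ! i) = Bf (Ms ! i) (es ! i) (inter_init Ms i)" for i
    unfolding beta0_def Bf_def inter_init_def by simp
  have ret: "returned Ms X ! i = df i (nreg (Ms ! i))" if "i < length Ms" for i
  proof -
    have "incremental (Ms ! i)" using assms(1) that by simp
    then have "alpha (Ms ! i) (df i) = df i (nreg (Ms ! i))" using incr_props by metis
    then show ?thesis using F that unfolding returned_def by simp
  qed
  have fin: "(\<Sum>i<length Ms. es ! i * Bf (Ms ! i) (es ! i) (df i))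
      \<le> (\<Sum>i<length Ms. es ! i * returned Ms X ! i)"
  proof (rule sum_mono)
    fix i assume "i \<in> {..<length Ms}"
    then have i: "i < length Ms" by simp
    have inc: "incremental (Ms ! i)" using assms(1) i by simp
    then have r1: "nreg (Ms ! i) \<ge> 1" unfolding incremental_def wf_aut_def by simp
    have nn: "\<forall>j\<in>{1..nreg (Ms ! i)}. df i j \<ge> 0" using RB i unfolding Inv_def by auto
    show "es ! i * Bf (Ms ! i) (es ! i) (df i) \<le> es ! i * returned Ms X ! i"
    proof (cases "es ! i \<ge> 0")
      case True then show ?thesis using ret[OF i] by (simp add: Bf_def)
    next
      case False
      have "df i (nreg (Ms ! i)) \<le> (\<Sum>j=1..nreg (Ms ! i). df i j)"
        by (rule member_le_sum) (use nn r1 in auto)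
      then show ?thesis using False ret[OF i] mult_left_mono_neg[of _ _ "es ! i"]
        by (simp add: Bf_def)
    qed
  qed
  have "int (length X - 1) + 1 = int (length X)" using assms(3) by simp
  then have "e0 * int (length X - 1) + e0 = e0 * int (length X)" by (metis distrib_left mult.right_neutral)
  then show ?thesis using RB fin len unfolding seq_weight_def b0 by simp
qed

end
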